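(* Let $L$ be an interval locale and $A:J\to\mathbf{Mon}(L_{+})$ a small diagram. Then $X=L(\operatorname{Im}(\varinjlim_{j\in J}A(j)))$ (colimit formed in presheaves) is the colimit of $A$ in $\mathbf{Mon}(L_{+})$, and for every $x\in X(i)$, $$\psi_X(x)=\bigvee_{(j,y)}\psi_{A(j)}(y),$$ where the join ranges over all pairs $(j,y)$ with $j\in J$ and $y\in A(j)(s)$ for some $s\in L$ such that $y\mapsto x$ under the composite $A(j)(s)\to\varinjlim_j A(j)(s)\to\operatorname{Im}(\varinjlim_j A(j))(s)\to X(i)$ (and $\psi_{A(j)}(y)$ means $\psi_{A(j)}$ evaluated at the image of $y$ in $A(j)(i)$).
   Context: A locale $L$ is a complete lattice in which finite meets distribute over arbitrary joins, with Grothendieck topology: $\{b_j\le a\}$ covers $a$ iff $\bigvee_j b_j=a$. $L$ is an interval if it is totally ordered and densely ordered. $i$ is the bottom element of $L$; $L_{+}=L\sqcup\{0\}$ with a new bottom $0<i$. $\mathbf{Mon}(L_{+})$ is the category of sheaves $F$ on $L_{+}$ with $F(b)\to F(a)$ injective for all $a\le b$ in $L$; regard $F(c)\subseteq F(i)$ for $c\in L$, and define $\psi_F:F(i)\to L$ by $\psi_F(x)=\sup\{b\in L: x\in F(b)\}$. For a presheaf $E$ on $L_{+}$, $\operatorname{Im}(E)(s)$ is the image of $E(s)\to E(i)$ for $s\in L$, $\operatorname{Im}(E)(0)=\ast$. For a presheaf $F$ on $L_{+}$, $LF(a)=\varprojlim_{0<b<a}F(b)$ for $a\in L$, $a\neq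 i$, $LF(i)=F(i)$, $LF(0)=\ast$. *)

theory Defs
  imports Main "HOL-Library.Option_ord"
begin

(* L_+ is modelled as 'l option: None is the new bottom 0, Some a is a \<in> L.
   The order / Sup / inf on 'l option come from HOL-Library.Option_ord
   (None < Some a, Sup of a family ignoring None). *)

record ('l, 'x) presheaf =
  psec :: "'l option \<Rightarrow> 'x set"
  pres :: "'l option \<Rightarrow> 'l option \<Rightarrow> 'x \<Rightarrow> 'x"

definition is_presheaf :: "('l::complete_linorder, 'x) presheaf \<Rightarrow> bool" where
  "is_presheaf F \<longleftrightarrow>
     (\<forall>s t. s \<le> t \<longrightarrow> (\<forall>x\<in>psec F t. pres F t s x \<in> psec F s)) \<and>
     (\<forall>s. \<forall>x\<in>psec F s. pres F s s x = x) \<and>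
     (\<forall>r s t. r \<le> s \<longrightarrow> s \<le> t \<longrightarrow>
        (\<forall>x\<in>psec F t. pres F s r (pres F t s x) = pres F t r x))"

(* Sheaf condition for the Grothendieck topology: B (\<subseteq> down-set of a) covers a iff Sup B = a. *)
definition is_sheaf :: "('l::complete_linorder, 'x) presheaf \<Rightarrow> bool" where
  "is_sheaf F \<longleftrightarrow> is_presheaf F \<and>
     (\<forall>a B. (\<forall>b\<in>B. b \<le> a) \<and> Sup B = a \<longrightarrow>
        (\<forall>\<phi>. (\<forall>b\<in>B. \<phi> b \<in> psec F b) \<and>
              (\<forall>b\<in>B. \<forall>c\<in>B. pres F b (inf b c) (\<phi> b) = pres F c (inf b c) (\<phi> c))
          \<longrightarrow> (\<exists>!x. x \<in> psec F a \<and> (\<forall>b\<in>B. pres F a b x = \<phi> b))))"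

definition is_mon :: "('l::complete_linorder, 'x) presheaf \<Rightarrow> bool" where
  "is_mon F \<longleftrightarrow> is_sheaf F \<and>
     (\<forall>a b. a \<le> b \<longrightarrow> inj_on (pres F (Some b) (Some a)) (psec F (Some b)))"

(* psi_F(x) = sup { b \<in> L : x \<in> F(b) }, with F(b) regarded as a subset of F(i) via restriction *)
definition psi :: "('l::complete_linorder, 'x) presheaf \<Rightarrow> 'x \<Rightarrow> 'l" where
  "psi F x = Sup {b. \<exists>y\<in>psec F (Some b). pres F (Some b) (Some bot) y = x}"

definition is_nat :: "('l::complete_linorder, 'x) presheaf \<Rightarrow> ('l, 'y) presheaf
                      \<Rightarrow> ('l option \<Rightarrow> 'x \<Rightarrow> 'y) \<Rightarrow> bool" where
  "is_nat F G \<eta> \<longleftrightarrow>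
     (\<forall>s. \<forall>x\<in>psec F s. \<eta> s x \<in> psec G s) \<and>
     (\<forall>s t. s \<le> t \<longrightarrow> (\<forall>x\<in>psec F t. \<eta> s (pres F t s x) = pres G t s (\<eta> t x)))"

record ('j, 'm) cat =
  cobj :: "'j set"
  carr :: "'m set"
  cdom :: "'m \<Rightarrow> 'j"
  ccod :: "'m \<Rightarrow> 'j"
  cid :: "'j \<Rightarrow> 'm"
  ccomp :: "'m \<Rightarrow> 'm \<Rightarrow> 'm"   (* ccomp g f = g \<circ> f *)

definition is_category :: "('j, 'm) cat \<Rightarrow> bool" where
  "is_category C \<longleftrightarrow>
     (\<forall>f\<in>carr C. cdom C f \<in> cobj C \<and> ccod C f \<in> cobj C) \<and>
     (\<forall>j\<in>cobj C. cid C j \<in> carr C \<and> cdom C (cid C j) = j \<and> ccod C (cid C j) = j) \<and>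
     (\<forall>f\<in>carr C. \<forall>g\<in>carr C. ccod C f = cdom C g \<longrightarrow>
        ccomp C g f \<in> carr C \<and> cdom C (ccomp C g f) = cdom C f \<and> ccod C (ccomp C g f) = ccod C g) \<and>
     (\<forall>f\<in>carr C. ccomp C f (cid C (cdom C f)) = f \<and> ccomp C (cid C (ccod C f)) f = f) \<and>
     (\<forall>f\<in>carr C. \<forall>g\<in>carr C. \<forall>h\<in>carr C. ccod C f = cdom C g \<longrightarrow> ccod C g = cdom C h \<longrightarrow>
        ccomp C h (ccomp C g f) = ccomp C (ccomp C h g) f)"

(* a diagram A : J \<rightarrow> Mon(L_+): object part A, arrow part AM (components of natural transformations) *)
definition is_mon_diagram :: "('j, 'm) cat \<Rightarrow> ('j \<Rightarrow> ('l::complete_linorder, 'x) presheaf)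
                              \<Rightarrow> ('m \<Rightarrow> 'l option \<Rightarrow> 'x \<Rightarrow> 'x) \<Rightarrow> bool" where
  "is_mon_diagram C A AM \<longleftrightarrow>
     (\<forall>j\<in>cobj C. is_mon (A j)) \<and>
     (\<forall>f\<in>carr C. is_nat (A (cdom C f)) (A (ccod C f)) (AM f)) \<and>
     (\<forall>j\<in>cobj C. \<forall>s. \<forall>x\<in>psec (A j) s. AM (cid C j) s x = x) \<and>
     (\<forall>f\<in>carr C. \<forall>g\<in>carr C. ccod C f = cdom C g \<longrightarrow>
        (\<forall>s. \<forall>x\<in>psec (A (cdom C f)) s. AM (ccomp C g f) s x = AM g s (AM f s x)))"

definition is_cocone :: "('j, 'm) cat \<Rightarrow> ('j \<Rightarrow> ('l::complete_linorder, 'x) presheaf)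
                         \<Rightarrow> ('m \<Rightarrow> 'l option \<Rightarrow> 'x \<Rightarrow> 'x) \<Rightarrow> ('l, 'y) presheaf
                         \<Rightarrow> ('j \<Rightarrow> 'l option \<Rightarrow> 'x \<Rightarrow> 'y) \<Rightarrow> bool" where
  "is_cocone C A AM Y g \<longleftrightarrow>
     (\<forall>j\<in>cobj C. is_nat (A j) Y (g j)) \<and>
     (\<forall>f\<in>carr C. \<forall>s. \<forall>x\<in>psec (A (cdom C f)) s. g (ccod C f) s (AM f s x) = g (cdom C f) s x)"

definition factors_through :: "('j, 'm) cat \<Rightarrow> ('j \<Rightarrow> ('l::complete_linorder, 'x) presheaf)
     \<Rightarrow> ('l, 'z) presheaf \<Rightarrow> ('j \<Rightarrow> 'l option \<Rightarrow> 'x \<Rightarrow> 'z)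
     \<Rightarrow> ('l, 'y) presheaf \<Rightarrow> ('j \<Rightarrow> 'l option \<Rightarrow> 'x \<Rightarrow> 'y)
     \<Rightarrow> ('l option \<Rightarrow> 'z \<Rightarrow> 'y) \<Rightarrow> bool" where
  "factors_through C A X \<iota> Y g u \<longleftrightarrow> is_nat X Y u \<and>
     (\<forall>j\<in>cobj C. \<forall>s. \<forall>y\<in>psec (A j) s. u s (\<iota> j s y) = g j s y)"

definition colim_step :: "('j, 'm) cat \<Rightarrow> ('j \<Rightarrow> ('l, 'x) presheaf)
     \<Rightarrow> ('m \<Rightarrow> 'l option \<Rightarrow> 'x \<Rightarrow> 'x) \<Rightarrow> 'l option \<Rightarrow> (('j \<times> 'x) \<times> ('j \<times> 'x)) set" where
  "colim_step C A AM s = {((cdom C f, y), (ccod C f, AM f s y)) | f y.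
       f \<in> carr C \<and> y \<in> psec (A (cdom C f)) s}"

definition colim_rel :: "('j, 'm) cat \<Rightarrow> ('j \<Rightarrow> ('l, 'x) presheaf)
     \<Rightarrow> ('m \<Rightarrow> 'l option \<Rightarrow> 'x \<Rightarrow> 'x) \<Rightarrow> 'l option \<Rightarrow> (('j \<times> 'x) \<times> ('j \<times> 'x)) set" where
  "colim_rel C A AM s = (colim_step C A AM s \<union> (colim_step C A AM s)\<inverse>)\<^sup>*"

definition colim_inj :: "('j, 'm) cat \<Rightarrow> ('j \<Rightarrow> ('l, 'x) presheaf)
     \<Rightarrow> ('m \<Rightarrow> 'l option \<Rightarrow> 'x \<Rightarrow> 'x) \<Rightarrow> 'j \<Rightarrow> 'l option \<Rightarrow> 'x \<Rightarrow> ('j \<times> 'x) set" where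
  "colim_inj C A AM j s y = colim_rel C A AM s `` {(j, y)}"

definition colim_psh :: "('j, 'm) cat \<Rightarrow> ('j \<Rightarrow> ('l, 'x) presheaf)
     \<Rightarrow> ('m \<Rightarrow> 'l option \<Rightarrow> 'x \<Rightarrow> 'x) \<Rightarrow> ('l, ('j \<times> 'x) set) presheaf" where
  "colim_psh C A AM =
     \<lparr> psec = (\<lambda>s. {colim_inj C A AM j s y | j y. j \<in> cobj C \<and> y \<in> psec (A j) s}),
       pres = (\<lambda>t s e. let p = (SOME p. p \<in> e)
                        in colim_inj C A AM (fst p) s (pres (A (fst p)) t s (snd p))) \<rparr>"

definition Im :: "('l::complete_linorder, 'e) presheaf \<Rightarrow> ('l, 'e) presheaf" where
  "Im E = \<lparr> psec = (\<lambda>s. case s of None \<Rightarrow> {undefined}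
                                | Some a \<Rightarrow> pres E (Some a) (Some bot) ` psec E (Some a)),
            pres = (\<lambda>t s z. if s = None then undefined else z) \<rparr>"

definition im_proj :: "('l::complete_linorder, 'e) presheaf \<Rightarrow> 'l option \<Rightarrow> 'e \<Rightarrow> 'e" where
  "im_proj E s x = (case s of None \<Rightarrow> undefined | Some a \<Rightarrow> pres E (Some a) (Some bot) x)"

(* ---- the functor L: LF(a) = lim_{0<b<a} F(b) (a \<noteq> i), LF(i) = F(i), LF(0) = * ----
   An element of LF(a), a \<noteq> i, is a compatible family \<phi> indexed by {b \<in> L. b < a}
   (undefined outside); an element x of LF(i) = F(i) is encoded as the family
   concentrated at i with value x. *)
definition Lsh :: "('l::complete_linorder, 'e) presheaf \<Rightarrow> ('l, 'l \<Rightarrow> 'e) presheaf" where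
  "Lsh F = \<lparr> psec = (\<lambda>s. case s of None \<Rightarrow> {\<lambda>_. undefined}
       | Some a \<Rightarrow> (if a = bot
            then {(\<lambda>b. if b = bot then x else undefined) | x. x \<in> psec F (Some bot)}
            else {\<phi>. (\<forall>b. b < a \<longrightarrow> \<phi> b \<in> psec F (Some b)) \<and>
                     (\<forall>b c. b \<le> c \<longrightarrow> c < a \<longrightarrow> pres F (Some c) (Some b) (\<phi> c) = \<phi> b) \<and>
                     (\<forall>b. \<not> b < a \<longrightarrow> \<phi> b = undefined)})),
     pres = (\<lambda>t s \<phi>. case s of None \<Rightarrow> (\<lambda>_. undefined)
       | Some c \<Rightarrow> (if c = bot then (\<lambda>b. if b = bot then \<phi> bot else undefined)
                    else (\<lambda>b. if b < c then \<phi> b else undefined))) \<rparr>"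

definition unitL :: "('l::complete_linorder, 'e) presheaf \<Rightarrow> 'l option \<Rightarrow> 'e \<Rightarrow> ('l \<Rightarrow> 'e)" where
  "unitL F s x = (case s of None \<Rightarrow> (\<lambda>_. undefined)
       | Some a \<Rightarrow> (if a = bot then (\<lambda>b. if b = bot then x else undefined)
                    else (\<lambda>b. if b < a then pres F (Some a) (Some b) x else undefined)))"

definition Xcolim :: "('j, 'm) cat \<Rightarrow> ('j \<Rightarrow> ('l::complete_linorder, 'x) presheaf)
     \<Rightarrow> ('m \<Rightarrow> 'l option \<Rightarrow> 'x \<Rightarrow> 'x) \<Rightarrow> ('l, 'l \<Rightarrow> ('j \<times> 'x) set) presheaf" where
  "Xcolim C A AM = Lsh (Im (colim_psh C A AM))"

definition Xcocone :: "('j, 'm) cat \<Rightarrow> ('j \<Rightarrow> ('l::complete_linorder, 'x) presheaf)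
     \<Rightarrow> ('m \<Rightarrow> 'l option \<Rightarrow> 'x \<Rightarrow> 'x) \<Rightarrow> 'j \<Rightarrow> 'l option \<Rightarrow> 'x \<Rightarrow> ('l \<Rightarrow> ('j \<times> 'x) set)" where
  "Xcocone C A AM j s y =
     unitL (Im (colim_psh C A AM)) s (im_proj (colim_psh C A AM) s (colim_inj C A AM j s y))"

end

theory Submission imports Defs begin

locale dia =
  fixes C :: "('j, 'm) cat"
    and A :: "'j \<Rightarrow> ('l::{complete_linorder, dense_linorder}, 'x) presheaf"
    and AM :: "'m \<Rightarrow> 'l option \<Rightarrow> 'x \<Rightarrow> 'x"
  assumes cat: "is_category C"
    and dia: "is_mon_diagram C A AM"
begin

abbreviation "E \<equiv> colim_psh C A AM"
abbreviation "cl \<equiv> colim_inj C A AM"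
abbreviation "rel \<equiv> colim_rel C A AM"
abbreviation "X \<equiv> Xcolim C A AM"

lemma Aj_psh: "j \<in> cobj C \<Longrightarrow> is_presheaf (A j)"
  using dia by (auto simp: is_mon_diagram_def is_mon_def is_sheaf_def)

lemma Aj_inj: "j \<in> cobj C \<Longrightarrow> a \<le> b \<Longrightarrow> inj_on (pres (A j) (Some b) (Some a)) (psec (A j) (Some b))"
  using dia by (auto simp: is_mon_diagram_def is_mon_def)

lemma f_nat: "f \<in> carr C \<Longrightarrow> is_nat (A (cdom C f)) (A (ccod C f)) (AM f)"
  using dia by (auto simp: is_mon_diagram_def)

lemma f_obj: "f \<in> carr C \<Longrightarrow> cdom C f \<in> cobj C \<and> ccod C f \<in> cobj C"
  using cat by (auto simp: is_category_def)

lemma psh_mem: "is_presheaf F \<Longrightarrow> s \<le> t \<Longrightarrow> x \<in> psec F t \<Longrightarrow> pres F t s x \<in> psec F s"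
  by (auto simp: is_presheaf_def)
lemma psh_id: "is_presheaf F \<Longrightarrow> x \<in> psec F s \<Longrightarrow> pres F s s x = x"
  by (auto simp: is_presheaf_def)
lemma psh_comp: "is_presheaf F \<Longrightarrow> r \<le> s \<Longrightarrow> s \<le> t \<Longrightarrow> x \<in> psec F t \<Longrightarrow> pres F s r (pres F t s x) = pres F t r x"
  by (auto simp: is_presheaf_def)

lemma rel_restrict:
  assumes "s \<le> t" "(p, q) \<in> rel t"
  shows "((fst p, pres (A (fst p)) t s (snd p)), (fst q, pres (A (fst q)) t s (snd q))) \<in> rel s"
  using assms(2) unfolding colim_rel_def
proof (induction q rule: rtrancl_induct)
  case base
  then show ?case by simp
next
  case (step q q')
  have "((fst q, pres (A (fst q)) t s (snd q)), (fst q', pres (A (fst q')) t s (snd q')))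
        \<in> colim_step C A AM s \<union> (colim_step C A AM s)\<inverse>"
  proof -
    have key: "((cdom C f, pres (A (cdom C f)) t s y), (ccod C f, pres (A (ccod C f)) t s (AM f t y)))
             \<in> colim_step C A AM s" if "f \<in> carr C" "y \<in> psec (A (cdom C f)) t" for f y
    proof -
      have "pres (A (ccod C f)) t s (AM f t y) = AM f s (pres (A (cdom C f)) t s y)"
        using f_nat[OF that(1)] that(2) assms(1) by (auto simp: is_nat_def)
      moreover have "pres (A (cdom C f)) t s y \<in> psec (A (cdom C f)) s"
        using psh_mem[OF Aj_psh[of "cdom C f"]] f_obj[OF that(1)] that(2) assms(1) by auto
      ultimately show ?thesis using that(1) unfolding colim_step_def by auto
    qed
    from step.hyps(2) show ?thesis
      unfolding colim_rel_def colim_step_def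
      using key by (auto simp: colim_step_def)
  qed
  with step.IH show ?case by (rule rtrancl_into_rtrancl)
qed

lemma rel_sym: "(p, q) \<in> rel s \<Longrightarrow> (q, p) \<in> rel s"
  unfolding colim_rel_def
  by (metis sym_Un_converse sym_rtrancl symD)

lemma rel_trans: "(p, q) \<in> rel s \<Longrightarrow> (q, r) \<in> rel s \<Longrightarrow> (p, r) \<in> rel s"
  unfolding colim_rel_def by (rule rtrancl_trans)

lemma rel_class: "(p, q) \<in> rel s \<Longrightarrow> rel s `` {p} = rel s `` {q}"
  using rel_sym rel_trans by blast

lemma cl_eq: "((j, y), (j', y')) \<in> rel s \<Longrightarrow> cl j s y = cl j' s y'"
  unfolding colim_inj_def by (rule rel_class)

lemma KEY:
  assumes "s \<le> t"
  shows "pres E t s (cl j t y) = cl j s (pres (A j) t s y)"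
proof -
  have mem: "(j, y) \<in> cl j t y" unfolding colim_inj_def colim_rel_def by auto
  define p where "p = (SOME p. p \<in> cl j t y)"
  have "p \<in> cl j t y" unfolding p_def using mem by (rule someI)
  then have "((j, y), p) \<in> rel t" unfolding colim_inj_def by auto
  from rel_restrict[OF assms this]
  have "cl j s (pres (A j) t s y) = cl (fst p) s (pres (A (fst p)) t s (snd p))"
    using cl_eq by simp
  then show ?thesis unfolding colim_psh_def p_def by (simp add: Let_def)
qed

definition cf :: "'l \<Rightarrow> ('j \<times> 'x) set \<Rightarrow> 'l \<Rightarrow> ('j \<times> 'x) set" where
  "cf a w = (\<lambda>b. if b < a \<or> b = bot then w else undefined)"

definition Rs :: "'l \<Rightarrow> ('j \<times> 'x) set set" where
  "Rs b = {cl j (Some bot) (pres (A j) (Some b) (Some bot) y) | j y. j \<in> cobj C \<and> y \<in> psec (A j) (Some b)}"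

definition Ws :: "'l \<Rightarrow> ('j \<times> 'x) set set" where
  "Ws a = {w. \<forall>b. (b < a \<or> b = bot) \<longrightarrow> w \<in> Rs b}"

lemma E_sec: "psec E s = {cl j s y | j y. j \<in> cobj C \<and> y \<in> psec (A j) s}"
  unfolding colim_psh_def by simp

lemma ImE_sec: "psec (Im E) (Some b) = Rs b"
proof -
  have "psec (Im E) (Some b) = pres E (Some b) (Some bot) ` psec E (Some b)"
    unfolding Im_def by simp
  also have "\<dots> = {pres E (Some b) (Some bot) (cl j (Some b) y) | j y. j \<in> cobj C \<and> y \<in> psec (A j) (Some b)}"
    unfolding E_sec by blast
  also have "\<dots> = Rs b" unfolding Rs_def
    by (simp add: KEY)
  finally show ?thesis .
qed

lemma ImE_pres: "pres (Im E) t (Some b) z = z"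
  unfolding Im_def by simp

lemma X_sec_None: "psec X None = {\<lambda>_. undefined}"
  unfolding Xcolim_def Lsh_def by simp

lemma X_sec_raw: "psec X (Some a) = (if a = bot then {(\<lambda>b. if b = bot then x else undefined) | x. x \<in> Rs bot}
   else {\<phi>. (\<forall>b. b < a \<longrightarrow> \<phi> b \<in> Rs b) \<and> (\<forall>b c. b \<le> c \<longrightarrow> c < a \<longrightarrow> \<phi> c = \<phi> b)
            \<and> (\<forall>b. \<not> b < a \<longrightarrow> \<phi> b = undefined)})"
  unfolding Xcolim_def Lsh_def by (simp add: ImE_sec ImE_pres)

lemma cf_bot: "cf bot w = (\<lambda>b. if b = bot then w else undefined)"
  unfolding cf_def by simp

lemma X_pres_raw: "pres X t (Some c) \<phi> = (if c = bot then (\<lambda>b. if b = bot then \<phi> bot else undefined)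
   else (\<lambda>b. if b < c then \<phi> b else undefined))"
  unfolding Xcolim_def Lsh_def by simp

lemma Ws_bot: "Ws bot = Rs bot"
  unfolding Ws_def by auto

lemma X_sec_Some: "psec X (Some a) = cf a ` Ws a"
proof (cases "a = bot")
  case True
  then show ?thesis using X_sec_raw[of a] Ws_bot by (auto simp: cf_bot)
next
  case False
  then have ba: "bot < a" using bot.not_eq_extremum by blast
  show ?thesis
  proof
    show "psec X (Some a) \<subseteq> cf a ` Ws a"
    proof
      fix \<phi> assume "\<phi> \<in> psec X (Some a)"
      then have h1: "\<And>b. b < a \<Longrightarrow> \<phi> b \<in> Rs b"
        and h2: "\<And>b c. b \<le> c \<Longrightarrow> c < a \<Longrightarrow> \<phi> c = \<phi> b"
        and h3: "\<And>b. \<not> b < a \<Longrightarrow> \<phi> b = undefined"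
        using False X_sec_raw[of a] by auto
      have "\<phi> = cf a (\<phi> bot)"
      proof (rule ext)
        fix b show "\<phi> b = cf a (\<phi> bot) b"
          using h2[of bot b] h3[of b] ba unfolding cf_def by auto
      qed
      moreover have "\<phi> bot \<in> Ws a"
        unfolding Ws_def
      proof (intro CollectI allI impI)
        fix b assume "b < a \<or> b = bot"
        then show "\<phi> bot \<in> Rs b"
        proof
          assume "b < a" then show ?thesis using h1[of b] h2[of bot b] by simp
        next
          assume "b = bot" then show ?thesis using h1[OF ba] by simp
        qed
      qed
      ultimately show "\<phi> \<in> cf a ` Ws a" by blast
    qed
  next
    show "cf a ` Ws a \<subseteq> psec X (Some a)"
    proof
      fix \<phi> assume "\<phi> \<in> cf a ` Ws a"
      then obtain w where w: "w \<in> Ws a" "\<phi> = cf a w" by auto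
      have "\<forall>b. b < a \<longrightarrow> \<phi> b \<in> Rs b" using w unfolding Ws_def cf_def by auto
      moreover have "\<forall>b c. b \<le> c \<longrightarrow> c < a \<longrightarrow> \<phi> c = \<phi> b"
        using w ba unfolding cf_def by (auto dest: order_le_less_trans)
      moreover have "\<forall>b. \<not> b < a \<longrightarrow> \<phi> b = undefined"
        using w ba unfolding cf_def by auto
      ultimately show "\<phi> \<in> psec X (Some a)" using False X_sec_raw[of a] by simp
    qed
  qed
qed

lemma X_pres_None: "pres X t None \<phi> = (\<lambda>_. undefined)"
  unfolding Xcolim_def Lsh_def by simp

lemma X_pres_Some: "c \<le> a \<Longrightarrow> pres X t (Some c) (cf a w) = cf c w"
proof (cases "c = bot")
  case True
  then show ?thesis unfolding X_pres_raw by (auto simp: cf_def intro!: ext)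
next
  case False
  assume ca: "c \<le> a"
  have "bot < c" using False bot.not_eq_extremum by blast
  show ?thesis unfolding X_pres_raw
  proof (simp only: False if_False, rule ext)
    fix b show "(if b < c then cf a w b else undefined) = cf c w b"
    proof (cases "b < c")
      case True
      then have "b < a" using ca by (rule order_less_le_trans)
      then show ?thesis using True by (simp add: cf_def)
    next
      case False
      then have "b \<noteq> bot" using \<open>bot < c\<close> by auto
      then show ?thesis using False by (simp add: cf_def)
    qed
  qed
qed

lemma cf_inj: "cf a w = cf a w' \<Longrightarrow> w = w'"
  unfolding cf_def by (drule fun_cong[of _ _ bot]) simp

lemma Rs_mono: "c \<le> b \<Longrightarrow> Rs b \<subseteq> Rs c"
proof
  fix w assume cb: "c \<le> b" and "w \<in> Rs b"
  then obtain j y where j: "j \<in> cobj C" "y \<in> psec (A j) (Some b)"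
    and w: "w = cl j (Some bot) (pres (A j) (Some b) (Some bot) y)" unfolding Rs_def by auto
  have "pres (A j) (Some b) (Some c) y \<in> psec (A j) (Some c)"
    using psh_mem[OF Aj_psh[OF j(1)]] j cb by auto
  moreover have "pres (A j) (Some c) (Some bot) (pres (A j) (Some b) (Some c) y) = pres (A j) (Some b) (Some bot) y"
    using psh_comp[OF Aj_psh[OF j(1)]] j cb by auto
  ultimately have "w = cl j (Some bot) (pres (A j) (Some c) (Some bot) (pres (A j) (Some b) (Some c) y))
     \<and> pres (A j) (Some b) (Some c) y \<in> psec (A j) (Some c)" using w by simp
  then show "w \<in> Rs c" unfolding Rs_def using j(1) by blast
qed

lemma Ws_mono: "c \<le> a \<Longrightarrow> Ws a \<subseteq> Ws c"
  unfolding Ws_def using order_less_le_trans by blast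


lemma Xcocone_None: "Xcocone C A AM j None y = (\<lambda>_. undefined)"
  unfolding Xcocone_def unitL_def by simp

lemma Xcocone_Some:
  assumes "j \<in> cobj C" "y \<in> psec (A j) (Some a)"
  shows "Xcocone C A AM j (Some a) y = cf a (cl j (Some bot) (pres (A j) (Some a) (Some bot) y))"
proof -
  have "im_proj E (Some a) (cl j (Some a) y) = cl j (Some bot) (pres (A j) (Some a) (Some bot) y)"
    unfolding im_proj_def by (simp add: KEY)
  moreover have "unitL (Im E) (Some a) v = cf a v" for v
  proof (cases "a = bot")
    case True
    then show ?thesis unfolding unitL_def by (simp add: cf_bot)
  next
    case False
    then have ba: "bot < a" using bot.not_eq_extremum by blast
    show ?thesis unfolding unitL_def
    proof (simp only: option.case False if_False, rule ext)
      fix b show "(if b < a then pres (Im E) (Some a) (Some b) v else undefined) = cf a v b"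
        using ba by (cases "b < a") (auto simp: cf_def ImE_pres)
    qed
  qed
  ultimately show ?thesis unfolding Xcocone_def by simp
qed

lemma Xcocone_W:
  assumes "j \<in> cobj C" "y \<in> psec (A j) (Some a)"
  shows "cl j (Some bot) (pres (A j) (Some a) (Some bot) y) \<in> Ws a"
proof -
  have "cl j (Some bot) (pres (A j) (Some a) (Some bot) y) \<in> Rs a"
    unfolding Rs_def using assms by auto
  show ?thesis unfolding Ws_def
  proof (intro CollectI allI impI)
    fix b assume "b < a \<or> b = bot"
    then have "b \<le> a" by auto
    then show "cl j (Some bot) (pres (A j) (Some a) (Some bot) y) \<in> Rs b"
      using Rs_mono \<open>_ \<in> Rs a\<close> by blast
  qed
qed

lemma cf_mem: "cf a w \<in> psec X (Some a) \<longleftrightarrow> w \<in> Ws a"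
  unfolding X_sec_Some using cf_inj by blast

lemma X_mem_Some: "x \<in> psec X (Some a) \<Longrightarrow> \<exists>w. w \<in> Ws a \<and> x = cf a w"
  unfolding X_sec_Some by blast

lemma X_presheaf: "is_presheaf X"
  unfolding is_presheaf_def
proof (intro conjI allI impI ballI)
  fix s t x assume st: "s \<le> t" and x: "x \<in> psec X t"
  show "pres X t s x \<in> psec X s"
  proof (cases s)
    case None then show ?thesis by (simp add: X_pres_None X_sec_None)
  next
    case (Some c)
    with st obtain a where t: "t = Some a" and ca: "c \<le> a"
      by (cases t) auto
    from x t obtain w where w: "w \<in> Ws a" "x = cf a w" using X_mem_Some by blast
    show ?thesis using Some t ca w Ws_mono[OF ca] by (auto simp: X_pres_Some cf_mem)
  qed
next
  fix s x assume x: "x \<in> psec X s"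
  show "pres X s s x = x"
  proof (cases s)
    case None then show ?thesis using x by (simp add: X_pres_None X_sec_None)
  next
    case (Some a)
    from x Some obtain w where w: "w \<in> Ws a" "x = cf a w" using X_mem_Some by blast
    then show ?thesis using Some by (simp add: X_pres_Some)
  qed
next
  fix r s t x assume rs: "r \<le> s" and st: "s \<le> t" and x: "x \<in> psec X t"
  show "pres X s r (pres X t s x) = pres X t r x"
  proof (cases r)
    case None then show ?thesis by (simp add: X_pres_None)
  next
    case (Some c)
    with rs obtain b where s: "s = Some b" and cb: "c \<le> b" by (cases s) auto
    with st obtain a where t: "t = Some a" and ba: "b \<le> a" by (cases t) auto
    from x t obtain w where w: "x = cf a w" using X_mem_Some by blast
    show ?thesis using Some s t w cb ba by (simp add: X_pres_Some)
  qed
qed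

lemma X_inj: "a \<le> b \<Longrightarrow> inj_on (pres X (Some b) (Some a)) (psec X (Some b))"
proof (rule inj_onI)
  fix x y assume ab: "a \<le> b" and "x \<in> psec X (Some b)" "y \<in> psec X (Some b)"
    and eq: "pres X (Some b) (Some a) x = pres X (Some b) (Some a) y"
  then obtain w w' where "x = cf b w" "y = cf b w'" using X_mem_Some by blast
  with eq ab have "cf a w = cf a w'" by (simp add: X_pres_Some)
  then have "w = w'" by (rule cf_inj)
  then show "x = y" using \<open>x = cf b w\<close> \<open>y = cf b w'\<close> by simp
qed

lemma X_sheaf: "is_sheaf X"
  unfolding is_sheaf_def
proof (intro conjI X_presheaf allI impI)
  fix a :: "'l option" and B :: "'l option set" and \<phi>
  assume aB: "(\<forall>b\<in>B. b \<le> a) \<and> Sup B = a"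
    and \<phi>: "(\<forall>b\<in>B. \<phi> b \<in> psec X b) \<and>
          (\<forall>b\<in>B. \<forall>c\<in>B. pres X b (inf b c) (\<phi> b) = pres X c (inf b c) (\<phi> c))"
  show "\<exists>!x. x \<in> psec X a \<and> (\<forall>b\<in>B. pres X a b x = \<phi> b)"
  proof (cases a)
    case None
    then have B: "\<And>b. b \<in> B \<Longrightarrow> b = None" using aB less_eq_option_None_is_None by blast
    show ?thesis
    proof (rule ex1I[of _ "\<lambda>_. undefined"])
      show "(\<lambda>_. undefined) \<in> psec X a \<and> (\<forall>b\<in>B. pres X a b (\<lambda>_. undefined) = \<phi> b)"
      proof
        show "(\<lambda>_. undefined) \<in> psec X a" using None by (simp add: X_sec_None)
        show "\<forall>b\<in>B. pres X a b (\<lambda>_. undefined) = \<phi> b"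
        proof
          fix b assume b: "b \<in> B"
          then have "b = None" using B by blast
          moreover have "\<phi> b \<in> psec X b" using \<phi> b by blast
          ultimately show "pres X a b (\<lambda>_. undefined) = \<phi> b" by (simp add: X_pres_None X_sec_None)
        qed
      qed
    next
      fix x assume "x \<in> psec X a \<and> (\<forall>b\<in>B. pres X a b x = \<phi> b)"
      then show "x = (\<lambda>_. undefined)" using None by (simp add: X_sec_None)
    qed
  next
    case (Some a')
    have "None < Sup B" using aB Some by simp
    then obtain x0 where "x0 \<in> B" "None < x0" by (auto simp: less_Sup_iff)
    then obtain b0 where b0: "Some b0 \<in> B" by (cases x0) auto
    obtain w where w: "w \<in> Ws b0" "\<phi> (Some b0) = cf b0 w"
      using \<phi> b0 X_mem_Some by blast
    have allw: "\<phi> (Some b) = cf b w \<and> w \<in> Ws b" if b: "Some b \<in> B" for b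
    proof -
      obtain w' where w': "w' \<in> Ws b" "\<phi> (Some b) = cf b w'"
        using \<phi> b X_mem_Some by blast
      have "pres X (Some b) (inf (Some b) (Some b0)) (\<phi> (Some b)) = pres X (Some b0) (inf (Some b) (Some b0)) (\<phi> (Some b0))"
        using \<phi> b b0 by blast
      moreover have "inf (Some b) (Some b0) = Some (min b b0)" by (simp add: inf_min min_def)
      ultimately have "cf (min b b0) w' = cf (min b b0) w"
        using w w' by (simp add: X_pres_Some)
      then have "w' = w" by (rule cf_inj)
      then show ?thesis using w' by simp
    qed
    have wa: "w \<in> Ws a'"
      unfolding Ws_def
    proof (intro CollectI allI impI)
      fix d assume "d < a' \<or> d = bot"
      then show "w \<in> Rs d"
      proof
        assume "d < a'"
        then have "Some d < Sup B" using aB Some by simp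
        then obtain x where "x \<in> B" "Some d < x" by (auto simp: less_Sup_iff)
        then obtain b where b: "Some b \<in> B" "d < b" by (cases x) auto
        then have "w \<in> Ws b" using allw by blast
        then show ?thesis using b(2) unfolding Ws_def by blast
      next
        assume "d = bot"
        then show ?thesis using w(1) unfolding Ws_def by blast
      qed
    qed
    show ?thesis
    proof (rule ex1I[of _ "cf a' w"])
      show "cf a' w \<in> psec X a \<and> (\<forall>b\<in>B. pres X a b (cf a' w) = \<phi> b)"
      proof (intro conjI ballI)
        show "cf a' w \<in> psec X a" using Some wa cf_mem by simp
      next
        fix b assume b: "b \<in> B"
        show "pres X a b (cf a' w) = \<phi> b"
        proof (cases b)
          case None
          moreover have "\<phi> b \<in> psec X b" using \<phi> b by blast
          ultimately show ?thesis by (simp add: X_pres_None X_sec_None)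
        next
          case (Some b')
          then have "b' \<le> a'" using aB b \<open>a = Some a'\<close> by auto
          then show ?thesis using Some allw b \<open>a = Some a'\<close> by (simp add: X_pres_Some)
        qed
      qed
    next
      fix x assume x: "x \<in> psec X a \<and> (\<forall>b\<in>B. pres X a b x = \<phi> b)"
      then obtain w'' where w'': "x = cf a' w''" using Some X_mem_Some by blast
      have "b0 \<le> a'" using aB b0 Some by auto
      moreover have "pres X a (Some b0) x = \<phi> (Some b0)" using x b0 by blast
      ultimately have "cf b0 w'' = cf b0 w" using w'' w Some by (simp add: X_pres_Some)
      then show "x = cf a' w" using w'' cf_inj by blast
    qed
  qed
qed

lemma X_mon: "is_mon X"
  unfolding is_mon_def using X_sheaf X_inj by blast

lemma cl_step:
  assumes "f \<in> carr C" "y \<in> psec (A (cdom C f)) s"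
  shows "cl (ccod C f) s (AM f s y) = cl (cdom C f) s y"
proof -
  have "((cdom C f, y), (ccod C f, AM f s y)) \<in> colim_step C A AM s"
    unfolding colim_step_def using assms by blast
  then have "((cdom C f, y), (ccod C f, AM f s y)) \<in> rel s"
    unfolding colim_rel_def by blast
  then show ?thesis using cl_eq by metis
qed

lemma X_cocone: "is_cocone C A AM X (Xcocone C A AM)"
  unfolding is_cocone_def
proof (intro conjI ballI allI)
  fix j assume j: "j \<in> cobj C"
  show "is_nat (A j) X (Xcocone C A AM j)"
    unfolding is_nat_def
  proof (intro conjI ballI allI impI)
    fix s x assume x: "x \<in> psec (A j) s"
    show "Xcocone C A AM j s x \<in> psec X s"
    proof (cases s)
      case None then show ?thesis by (simp add: Xcocone_None X_sec_None)
    next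
      case (Some a) then show ?thesis using Xcocone_Some[OF j] Xcocone_W[OF j] x cf_mem by simp
    qed
  next
    fix s t x assume st: "s \<le> t" and x: "x \<in> psec (A j) t"
    show "Xcocone C A AM j s (pres (A j) t s x) = pres X t s (Xcocone C A AM j t x)"
    proof (cases s)
      case None then show ?thesis by (simp add: Xcocone_None X_pres_None)
    next
      case (Some c)
      with st obtain a where t: "t = Some a" and ca: "c \<le> a" by (cases t) auto
      have m: "pres (A j) t s x \<in> psec (A j) (Some c)" using psh_mem[OF Aj_psh[OF j] st x] Some by simp
      have "pres (A j) (Some c) (Some bot) (pres (A j) t s x) = pres (A j) (Some a) (Some bot) x"
        using psh_comp[OF Aj_psh[OF j], of "Some bot" s t x] st x Some t by simp
      then show ?thesis using Xcocone_Some[OF j m] Xcocone_Some[OF j, of x a] x t Some ca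
        by (simp add: X_pres_Some)
    qed
  qed
next
  fix f s x assume f: "f \<in> carr C" and x: "x \<in> psec (A (cdom C f)) s"
  show "Xcocone C A AM (ccod C f) s (AM f s x) = Xcocone C A AM (cdom C f) s x"
  proof (cases s)
    case None then show ?thesis by (simp add: Xcocone_None)
  next
    case (Some a)
    have nat: "is_nat (A (cdom C f)) (A (ccod C f)) (AM f)" by (rule f_nat[OF f])
    have m: "AM f s x \<in> psec (A (ccod C f)) s" using nat x unfolding is_nat_def by blast
    have xb: "pres (A (cdom C f)) s (Some bot) x \<in> psec (A (cdom C f)) (Some bot)"
      using psh_mem[OF Aj_psh] f_obj[OF f] x Some by simp
    have "pres (A (ccod C f)) s (Some bot) (AM f s x) = AM f (Some bot) (pres (A (cdom C f)) s (Some bot) x)"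
      using nat x Some unfolding is_nat_def by simp
    then have "cl (ccod C f) (Some bot) (pres (A (ccod C f)) s (Some bot) (AM f s x))
             = cl (cdom C f) (Some bot) (pres (A (cdom C f)) s (Some bot) x)"
      using cl_step[OF f xb] by simp
    then show ?thesis using Xcocone_Some[of "ccod C f" "AM f s x" a] Xcocone_Some[of "cdom C f" x a]
        f_obj[OF f] m x Some by simp
  qed
qed

lemma g_inv:
  assumes g: "is_cocone C A AM Y g" and pq: "(p, q) \<in> rel s"
    and p: "fst p \<in> cobj C" "snd p \<in> psec (A (fst p)) s"
  shows "fst q \<in> cobj C \<and> snd q \<in> psec (A (fst q)) s \<and> g (fst q) s (snd q) = g (fst p) s (snd p)"
  using pq unfolding colim_rel_def
proof (induction q rule: rtrancl_induct)
  case base then show ?case using p by simp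
next
  case (step q q')
  from step.hyps(2) show ?case
  proof
    assume "(q, q') \<in> colim_step C A AM s"
    then obtain f y where f: "f \<in> carr C" "y \<in> psec (A (cdom C f)) s"
      and q: "q = (cdom C f, y)" and q': "q' = (ccod C f, AM f s y)"
      unfolding colim_step_def by blast
    have "AM f s y \<in> psec (A (ccod C f)) s" using f_nat[OF f(1)] f(2) unfolding is_nat_def by blast
    moreover have "g (ccod C f) s (AM f s y) = g (cdom C f) s y" using g f unfolding is_cocone_def by blast
    ultimately show ?thesis using step.IH q q' f_obj[OF f(1)] by simp
  next
    assume "(q, q') \<in> (colim_step C A AM s)\<inverse>"
    then obtain f y where f: "f \<in> carr C" "y \<in> psec (A (cdom C f)) s"
      and q': "q' = (cdom C f, y)" and q: "q = (ccod C f, AM f s y)"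
      unfolding colim_step_def by blast
    have "g (ccod C f) s (AM f s y) = g (cdom C f) s y" using g f unfolding is_cocone_def by blast
    then show ?thesis using step.IH q q' f_obj[OF f(1)] f(2) by simp
  qed
qed

lemma X_universal:
  fixes Y :: "('l, 'y) presheaf"
  assumes Y: "is_mon Y" and g: "is_cocone C A AM Y g"
  shows "\<exists>u. factors_through C A X (Xcocone C A AM) Y g u \<and>
                 (\<forall>u'. factors_through C A X (Xcocone C A AM) Y g u' \<longrightarrow>
                     (\<forall>s. \<forall>z\<in>psec X s. u' s z = u s z))"
proof -
  have Ysh: "is_sheaf Y" using Y unfolding is_mon_def by blast
  have Yp: "is_presheaf Y" using Ysh unfolding is_sheaf_def by blast
  have Yinj: "\<And>a b. a \<le> b \<Longrightarrow> inj_on (pres Y (Some b) (Some a)) (psec Y (Some b))"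
    using Y unfolding is_mon_def by blast
  have Yglue: "\<And>a B \<phi>. (\<forall>b\<in>B. b \<le> a) \<Longrightarrow> Sup B = a \<Longrightarrow> (\<forall>b\<in>B. \<phi> b \<in> psec Y b) \<Longrightarrow>
              (\<forall>b\<in>B. \<forall>c\<in>B. pres Y b (inf b c) (\<phi> b) = pres Y c (inf b c) (\<phi> c)) \<Longrightarrow>
              \<exists>x. x \<in> psec Y a \<and> (\<forall>b\<in>B. pres Y a b x = \<phi> b)"
  proof -
    fix a B \<phi>
    assume h: "\<forall>b\<in>B. b \<le> a" "Sup B = a" "\<forall>b\<in>B. \<phi> b \<in> psec Y b"
      "\<forall>b\<in>B. \<forall>c\<in>B. pres Y b (inf b c) (\<phi> b) = pres Y c (inf b c) (\<phi> c)"
    from Ysh have H: "\<forall>a B. (\<forall>b\<in>B. b \<le> a) \<and> Sup B = a \<longrightarrow>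
        (\<forall>\<phi>. (\<forall>b\<in>B. \<phi> b \<in> psec Y b) \<and>
              (\<forall>b\<in>B. \<forall>c\<in>B. pres Y b (inf b c) (\<phi> b) = pres Y c (inf b c) (\<phi> c))
          \<longrightarrow> (\<exists>!x. x \<in> psec Y a \<and> (\<forall>b\<in>B. pres Y a b x = \<phi> b)))"
      unfolding is_sheaf_def by (rule conjunct2)
    have "\<exists>!x. x \<in> psec Y a \<and> (\<forall>b\<in>B. pres Y a b x = \<phi> b)"
      using H[rule_format, of B a \<phi>] h by blast
    then show "\<exists>x. x \<in> psec Y a \<and> (\<forall>b\<in>B. pres Y a b x = \<phi> b)" by (rule ex1_implies_ex)
  qed
  obtain y0 where y0: "y0 \<in> psec Y None"
    using Yglue[of "{}" None "\<lambda>_. undefined"] by (auto simp: bot_option_def)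
  have Ynone: "\<And>v. v \<in> psec Y None \<Longrightarrow> v = y0"
  proof -
    fix v assume v: "v \<in> psec Y None"
    from Ysh have H: "\<forall>a B. (\<forall>b\<in>B. b \<le> a) \<and> Sup B = a \<longrightarrow>
        (\<forall>\<phi>. (\<forall>b\<in>B. \<phi> b \<in> psec Y b) \<and>
              (\<forall>b\<in>B. \<forall>c\<in>B. pres Y b (inf b c) (\<phi> b) = pres Y c (inf b c) (\<phi> c))
          \<longrightarrow> (\<exists>!x. x \<in> psec Y a \<and> (\<forall>b\<in>B. pres Y a b x = \<phi> b)))"
      unfolding is_sheaf_def by (rule conjunct2)
    have "\<exists>!x. x \<in> psec Y None \<and> (\<forall>b\<in>{}. pres Y None b x = (\<lambda>_. y0) b)"
      using H[rule_format, of "{}" None "\<lambda>_. y0"] by (simp add: bot_option_def)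
    then show "v = y0" using v y0 by blast
  qed
  have Yuniq: "\<And>a v1 v2. v1 \<in> psec Y (Some a) \<Longrightarrow> v2 \<in> psec Y (Some a) \<Longrightarrow>
       pres Y (Some a) (Some bot) v1 = pres Y (Some a) (Some bot) v2 \<Longrightarrow> v1 = v2"
    using Yinj[OF bot_least] by (meson inj_onD)
  have gnat: "\<And>j. j \<in> cobj C \<Longrightarrow> is_nat (A j) Y (g j)"
    using g unfolding is_cocone_def by blast
  define G where "G w = (THE v. \<exists>j y. j \<in> cobj C \<and> y \<in> psec (A j) (Some bot) \<and> w = cl j (Some bot) y \<and> v = g j (Some bot) y)" for w
  have G_eq: "G (cl j (Some bot) y) = g j (Some bot) y" if j: "j \<in> cobj C" "y \<in> psec (A j) (Some bot)" for j y
    unfolding G_def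
  proof (rule the_equality)
    show "\<exists>j' y'. j' \<in> cobj C \<and> y' \<in> psec (A j') (Some bot) \<and> cl j (Some bot) y = cl j' (Some bot) y' \<and> g j (Some bot) y = g j' (Some bot) y'"
      using j by blast
  next
    fix v assume "\<exists>j' y'. j' \<in> cobj C \<and> y' \<in> psec (A j') (Some bot) \<and> cl j (Some bot) y = cl j' (Some bot) y' \<and> v = g j' (Some bot) y'"
    then obtain j' y' where h: "j' \<in> cobj C" "y' \<in> psec (A j') (Some bot)" "cl j (Some bot) y = cl j' (Some bot) y'" "v = g j' (Some bot) y'"
      by blast
    have "(j, y) \<in> cl j (Some bot) y" unfolding colim_inj_def colim_rel_def by auto
    then have "((j', y'), (j, y)) \<in> rel (Some bot)" using h(3) unfolding colim_inj_def by auto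
    from g_inv[OF g this] h show "v = g j (Some bot) y" by simp
  qed
  have lift: "\<exists>v\<in>psec Y (Some c). pres Y (Some c) (Some bot) v = G w" if w: "w \<in> Rs c" for w c
  proof -
    obtain j y where j: "j \<in> cobj C" "y \<in> psec (A j) (Some c)"
      and wd: "w = cl j (Some bot) (pres (A j) (Some c) (Some bot) y)" using w unfolding Rs_def by blast
    have yb: "pres (A j) (Some c) (Some bot) y \<in> psec (A j) (Some bot)"
      using psh_mem[OF Aj_psh[OF j(1)]] j(2) by simp
    have "g j (Some c) y \<in> psec Y (Some c)" using gnat[OF j(1)] j(2) unfolding is_nat_def by blast
    moreover have "pres Y (Some c) (Some bot) (g j (Some c) y) = g j (Some bot) (pres (A j) (Some c) (Some bot) y)"
      using gnat[OF j(1)] j(2) unfolding is_nat_def by simp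
    ultimately show ?thesis using G_eq[OF j(1) yb] wd by metis
  qed
  have ext: "\<exists>v\<in>psec Y (Some a). pres Y (Some a) (Some bot) v = G w" if w: "w \<in> Ws a" for w a
  proof (cases "a = bot")
    case True
    then show ?thesis using lift w Ws_bot by simp
  next
    case False
    then have ba: "bot < a" using bot.not_eq_extremum by blast
    define \<psi> where "\<psi> b = (THE v. v \<in> psec Y b \<and> pres Y b (Some bot) v = G w)" for b
    have \<psi>: "\<psi> (Some c) \<in> psec Y (Some c) \<and> pres Y (Some c) (Some bot) (\<psi> (Some c)) = G w" if c: "c < a" for c
    proof -
      have "w \<in> Rs c" using w c unfolding Ws_def by blast
      then obtain v where v: "v \<in> psec Y (Some c)" "pres Y (Some c) (Some bot) v = G w" using lift by blast
      have "\<psi> (Some c) = v" unfolding \<psi>_def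
        by (rule the_equality) (use v Yuniq in auto)
      then show ?thesis using v by simp
    qed
    define B where "B = Some ` {c. c < a}"
    have SupB: "Sup B = Some a"
    proof -
      have "Sup {c. c < a} = a"
      proof (rule antisym)
        show "Sup {c. c < a} \<le> a" by (rule Sup_least) simp
        show "a \<le> Sup {c. c < a}" by (rule dense_le) (rule Sup_upper, simp)
      qed
      moreover have "{c. c < a} \<noteq> {}" using ba by blast
      ultimately show ?thesis unfolding B_def using Some_Sup by metis
    qed
    have compat: "\<forall>b\<in>B. \<forall>c\<in>B. pres Y b (inf b c) (\<psi> b) = pres Y c (inf b c) (\<psi> c)"
    proof (intro ballI)
      fix b c assume "b \<in> B" "c \<in> B"
      then obtain b' c' where bc: "b = Some b'" "c = Some c'" "b' < a" "c' < a" unfolding B_def by blast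
      define m where "m = min b' c'"
      have infm: "inf b c = Some m" unfolding m_def using bc by (simp add: inf_min min_def)
      have mb: "m \<le> b'" "m \<le> c'" unfolding m_def by auto
      have "pres Y (Some b') (Some m) (\<psi> (Some b')) \<in> psec Y (Some m)"
        using psh_mem[OF Yp] \<psi>[OF bc(3)] mb by simp
      moreover have "pres Y (Some c') (Some m) (\<psi> (Some c')) \<in> psec Y (Some m)"
        using psh_mem[OF Yp] \<psi>[OF bc(4)] mb by simp
      moreover have "pres Y (Some m) (Some bot) (pres Y (Some b') (Some m) (\<psi> (Some b'))) = G w"
        using psh_comp[OF Yp, of "Some bot" "Some m" "Some b'"] \<psi>[OF bc(3)] mb by simp
      moreover have "pres Y (Some m) (Some bot) (pres Y (Some c') (Some m) (\<psi> (Some c'))) = G w"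
        using psh_comp[OF Yp, of "Some bot" "Some m" "Some c'"] \<psi>[OF bc(4)] mb by simp
      ultimately show "pres Y b (inf b c) (\<psi> b) = pres Y c (inf b c) (\<psi> c)"
        using Yuniq infm bc by metis
    qed
    have "\<forall>b\<in>B. b \<le> Some a" unfolding B_def by auto
    moreover have "\<forall>b\<in>B. \<psi> b \<in> psec Y b" unfolding B_def using \<psi> by auto
    ultimately obtain v where v: "v \<in> psec Y (Some a)" "\<forall>b\<in>B. pres Y (Some a) b v = \<psi> b"
      using Yglue[OF _ SupB _ compat] by blast
    have "Some bot \<in> B" unfolding B_def using ba by blast
    then have "pres Y (Some a) (Some bot) v = \<psi> (Some bot)" using v by blast
    also have "\<dots> = G w" using \<psi>[OF ba] psh_id[OF Yp] by metis
    finally show ?thesis using v by blast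
  qed
  define u :: "'l option \<Rightarrow> ('l \<Rightarrow> ('j \<times> 'x) set) \<Rightarrow> 'y" where "u s z = (case s of None \<Rightarrow> y0 | Some a \<Rightarrow>
       (THE v. v \<in> psec Y (Some a) \<and> pres Y (Some a) (Some bot) v = G (z bot)))" for s z
  have uS: "u (Some a) (cf a w) \<in> psec Y (Some a) \<and> pres Y (Some a) (Some bot) (u (Some a) (cf a w)) = G w"
    if w: "w \<in> Ws a" for a w
  proof -
    obtain v where v: "v \<in> psec Y (Some a)" "pres Y (Some a) (Some bot) v = G w" using ext[OF w] by blast
    have "cf a w bot = w" unfolding cf_def by simp
    then have "u (Some a) (cf a w) = (THE v. v \<in> psec Y (Some a) \<and> pres Y (Some a) (Some bot) v = G w)"
      unfolding u_def by simp
    also have "\<dots> = v" by (rule the_equality) (use v Yuniq in auto)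
    finally have "u (Some a) (cf a w) = v" .
    then show ?thesis using v by simp
  qed
  have fac: "factors_through C A X (Xcocone C A AM) Y g u"
    unfolding factors_through_def is_nat_def
  proof (intro conjI ballI allI impI)
    fix s z assume z: "z \<in> psec X s"
    show "u s z \<in> psec Y s"
    proof (cases s)
      case None then show ?thesis using y0 by (simp add: u_def)
    next
      case (Some a)
      then obtain w where "w \<in> Ws a" "z = cf a w" using z X_mem_Some by blast
      then show ?thesis using uS Some by blast
    qed
  next
    fix s t z assume st: "s \<le> t" and z: "z \<in> psec X t"
    show "u s (pres X t s z) = pres Y t s (u t z)"
    proof (cases s)
      case None
      have "u t z \<in> psec Y t"
      proof (cases t)
        case None then show ?thesis using y0 by (simp add: u_def)
      next
        case (Some a)
        then obtain w where "w \<in> Ws a" "z = cf a w" using z X_mem_Some by blast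
        then show ?thesis using uS Some by blast
      qed
      then have "pres Y t s (u t z) \<in> psec Y None" using psh_mem[OF Yp st] None by simp
      then show ?thesis using None Ynone by (simp add: u_def)
    next
      case (Some c)
      with st obtain a where t: "t = Some a" and ca: "c \<le> a" by (cases t) auto
      obtain w where w: "w \<in> Ws a" "z = cf a w" using z t X_mem_Some by blast
      have wc: "w \<in> Ws c" using Ws_mono[OF ca] w by blast
      have l: "u s (pres X t s z) = u (Some c) (cf c w)" using Some t w ca by (simp add: X_pres_Some)
      have "pres Y t s (u t z) \<in> psec Y (Some c)" using psh_mem[OF Yp st] uS[OF w(1)] t w Some by simp
      moreover have "pres Y (Some c) (Some bot) (pres Y t s (u t z)) = G w"
        using psh_comp[OF Yp, of "Some bot" s t] uS[OF w(1)] t w Some ca by simp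
      ultimately show ?thesis using l uS[OF wc] Yuniq by metis
    qed
  next
    fix j s y assume j: "j \<in> cobj C" and y: "y \<in> psec (A j) s"
    show "u s (Xcocone C A AM j s y) = g j s y"
    proof (cases s)
      case None
      have "g j s y \<in> psec Y None" using gnat[OF j] y None unfolding is_nat_def by blast
      then show ?thesis using None Ynone by (simp add: u_def)
    next
      case (Some a)
      define w where "w = cl j (Some bot) (pres (A j) (Some a) (Some bot) y)"
      have w: "w \<in> Ws a" unfolding w_def using Xcocone_W[OF j] y Some by simp
      have xc: "Xcocone C A AM j s y = cf a w" unfolding w_def using Xcocone_Some[OF j] y Some by simp
      have yb: "pres (A j) (Some a) (Some bot) y \<in> psec (A j) (Some bot)"
        using psh_mem[OF Aj_psh[OF j]] y Some by simp
      have "g j s y \<in> psec Y (Some a)" using gnat[OF j] y Some unfolding is_nat_def by blast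
      moreover have "pres Y (Some a) (Some bot) (g j s y) = G w"
        using gnat[OF j] y Some G_eq[OF j yb] unfolding is_nat_def w_def by simp
      ultimately show ?thesis using xc uS[OF w] Yuniq Some by metis
    qed
  qed
  have uniq: "\<forall>u'. factors_through C A X (Xcocone C A AM) Y g u' \<longrightarrow> (\<forall>s. \<forall>z\<in>psec X s. u' s z = u s z)"
  proof (intro allI impI ballI)
    fix u' s z assume f': "factors_through C A X (Xcocone C A AM) Y g u'" and z: "z \<in> psec X s"
    have n': "is_nat X Y u'" using f' unfolding factors_through_def by blast
    have n: "is_nat X Y u" using fac unfolding factors_through_def by blast
    show "u' s z = u s z"
    proof (cases s)
      case None
      then show ?thesis using n n' z Ynone unfolding is_nat_def by metis
    next
      case (Some a)
      obtain w where w: "w \<in> Ws a" "z = cf a w" using z Some X_mem_Some by blast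
      have "w \<in> Rs bot" using w unfolding Ws_def by blast
      then obtain j y where j: "j \<in> cobj C" "y \<in> psec (A j) (Some bot)"
        and wd: "w = cl j (Some bot) (pres (A j) (Some bot) (Some bot) y)" unfolding Rs_def by blast
      have xb: "Xcocone C A AM j (Some bot) y = cf bot w" using Xcocone_Some[OF j] wd by simp
      have "pres X (Some a) (Some bot) z = cf bot w" using w by (simp add: X_pres_Some)
      then have e: "pres Y (Some a) (Some bot) (u' (Some a) z) = g j (Some bot) y"
        using n' z Some xb f' j unfolding is_nat_def factors_through_def
        by (metis bot_least less_eq_option_Some)
      have e2: "pres Y (Some a) (Some bot) (u (Some a) z) = g j (Some bot) y"
        using uS[OF w(1)] w G_eq[OF j] wd psh_id[OF Aj_psh[OF j(1)] j(2)] by simp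
      have "u' (Some a) z \<in> psec Y (Some a)" "u (Some a) z \<in> psec Y (Some a)"
        using n n' z Some unfolding is_nat_def by auto
      then show ?thesis using e e2 Yuniq Some by metis
    qed
  qed
  show ?thesis using fac uniq by blast
qed

lemma X_psi:
  assumes x: "x \<in> psec X (Some bot)"
  shows "psi X x =
              Sup {psi (A j) (pres (A j) (Some s) (Some bot) y) | j s y.
                     j \<in> cobj C \<and> y \<in> psec (A j) (Some s) \<and>
                     pres X (Some s) (Some bot) (Xcocone C A AM j (Some s) y) = x}"
    (is "_ = Sup ?S")
proof -
  obtain w where w: "w \<in> Ws bot" "x = cf bot w" using x X_mem_Some by blast
  have L: "{b. \<exists>y\<in>psec X (Some b). pres X (Some b) (Some bot) y = x} = {b. w \<in> Ws b}"
  proof (intro set_eqI iffI)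
    fix b assume "b \<in> {b. \<exists>y\<in>psec X (Some b). pres X (Some b) (Some bot) y = x}"
    then obtain y where y: "y \<in> psec X (Some b)" "pres X (Some b) (Some bot) y = x" by blast
    then obtain w' where w': "w' \<in> Ws b" "y = cf b w'" using X_mem_Some by blast
    then have "cf bot w' = cf bot w" using y w by (simp add: X_pres_Some)
    then have "w' = w" by (rule cf_inj)
    then show "b \<in> {b. w \<in> Ws b}" using w' by simp
  next
    fix b assume "b \<in> {b. w \<in> Ws b}"
    then have "cf b w \<in> psec X (Some b)" using cf_mem by simp
    moreover have "pres X (Some b) (Some bot) (cf b w) = x" using w by (simp add: X_pres_Some)
    ultimately show "b \<in> {b. \<exists>y\<in>psec X (Some b). pres X (Some b) (Some bot) y = x}" by blast
  qed
  have memS: "pres X (Some s) (Some bot) (Xcocone C A AM j (Some s) y) = x \<longleftrightarrow>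
              cl j (Some bot) (pres (A j) (Some s) (Some bot) y) = w"
    if j: "j \<in> cobj C" "y \<in> psec (A j) (Some s)" for j s y
    using Xcocone_Some[OF j] w cf_inj by (auto simp: X_pres_Some)
  have "Sup {b. w \<in> Ws b} \<le> Sup ?S"
  proof (rule Sup_least)
    fix b assume "b \<in> {b. w \<in> Ws b}"
    then have wb: "w \<in> Ws b" by simp
    show "b \<le> Sup ?S"
    proof (rule dense_le)
      fix c assume cb: "c < b"
      then have "w \<in> Rs c" using wb unfolding Ws_def by blast
      then obtain j y where j: "j \<in> cobj C" "y \<in> psec (A j) (Some c)"
        and wd: "w = cl j (Some bot) (pres (A j) (Some c) (Some bot) y)" unfolding Rs_def by blast
      have inS: "psi (A j) (pres (A j) (Some c) (Some bot) y) \<in> ?S"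
        using memS[OF j] wd j by blast
      have "c \<le> psi (A j) (pres (A j) (Some c) (Some bot) y)"
        unfolding psi_def using j(2) by (intro Sup_upper) blast
      also have "\<dots> \<le> Sup ?S" using inS by (rule Sup_upper)
      finally show "c \<le> Sup ?S" .
    qed
  qed
  moreover have "Sup ?S \<le> Sup {b. w \<in> Ws b}"
  proof (rule Sup_least)
    fix e assume "e \<in> ?S"
    then obtain j s y where j: "j \<in> cobj C" "y \<in> psec (A j) (Some s)"
      and e: "e = psi (A j) (pres (A j) (Some s) (Some bot) y)"
      and xe: "pres X (Some s) (Some bot) (Xcocone C A AM j (Some s) y) = x" by blast
    have wd: "cl j (Some bot) (pres (A j) (Some s) (Some bot) y) = w" using memS[OF j] xe by simp
    show "e \<le> Sup {b. w \<in> Ws b}" unfolding e psi_def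
    proof (rule Sup_least)
      fix b assume "b \<in> {b. \<exists>y'\<in>psec (A j) (Some b). pres (A j) (Some b) (Some bot) y' = pres (A j) (Some s) (Some bot) y}"
      then obtain y' where y': "y' \<in> psec (A j) (Some b)" "pres (A j) (Some b) (Some bot) y' = pres (A j) (Some s) (Some bot) y" by blast
      have "w = cl j (Some bot) (pres (A j) (Some b) (Some bot) y')" using y'(2) wd by simp
      then have "w \<in> Rs b" unfolding Rs_def using j(1) y'(1) by blast
      then have "w \<in> Ws b" unfolding Ws_def
      proof (intro CollectI allI impI)
        fix d assume "w \<in> Rs b" "d < b \<or> d = bot"
        then have "d \<le> b" by auto
        then show "w \<in> Rs d" using Rs_mono \<open>w \<in> Rs b\<close> by blast
      qed
      then show "b \<le> Sup {b. w \<in> Ws b}" by (intro Sup_upper) simp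
    qed
  qed
  ultimately show ?thesis unfolding psi_def L by (rule antisym)
qed

end

theorem lemma28:
  fixes C :: "('j, 'm) cat"
    and A :: "'j \<Rightarrow> ('l::{complete_linorder, dense_linorder}, 'x) presheaf"
    and AM :: "'m \<Rightarrow> 'l option \<Rightarrow> 'x \<Rightarrow> 'x"
  assumes "is_category C"
    and "is_mon_diagram C A AM"
  shows "is_mon (Xcolim C A AM)
       \<and> is_cocone C A AM (Xcolim C A AM) (Xcocone C A AM)
       \<and> (\<forall>(Y :: ('l, 'y) presheaf) g. is_mon Y \<and> is_cocone C A AM Y g \<longrightarrow>
            (\<exists>u. factors_through C A (Xcolim C A AM) (Xcocone C A AM) Y g u \<and>
                 (\<forall>u'. factors_through C A (Xcolim C A AM) (Xcocone C A AM) Y g u' \<longrightarrow>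
                     (\<forall>s. \<forall>z\<in>psec (Xcolim C A AM) s. u' s z = u s z))))
       \<and> (\<forall>x\<in>psec (Xcolim C A AM) (Some bot).
            psi (Xcolim C A AM) x =
              Sup {psi (A j) (pres (A j) (Some s) (Some bot) y) | j s y.
                     j \<in> cobj C \<and> y \<in> psec (A j) (Some s) \<and>
                     pres (Xcolim C A AM) (Some s) (Some bot) (Xcocone C A AM j (Some s) y) = x})"
proof -
  interpret dia C A AM using assms by (rule dia.intro)
  show ?thesis
  proof (intro conjI allI impI ballI)
    show "is_mon (Xcolim C A AM)" by (rule X_mon)
    show "is_cocone C A AM (Xcolim C A AM) (Xcocone C A AM)" by (rule X_cocone)
  next
    fix Y :: "('l, 'y) presheaf" and g
    assume "is_mon Y \<and> is_cocone C A AM Y g"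
    then show "\<exists>u. factors_through C A (Xcolim C A AM) (Xcocone C A AM) Y g u \<and>
                 (\<forall>u'. factors_through C A (Xcolim C A AM) (Xcocone C A AM) Y g u' \<longrightarrow>
                     (\<forall>s. \<forall>z\<in>psec (Xcolim C A AM) s. u' s z = u s z))"
      using X_universal by blast
  next
    fix x assume "x \<in> psec (Xcolim C A AM) (Some bot)"
    then show "psi (Xcolim C A AM) x =
              Sup {psi (A j) (pres (A j) (Some s) (Some bot) y) | j s y.
                     j \<in> cobj C \<and> y \<in> psec (A j) (Some s) \<and>
                     pres (Xcolim C A AM) (Some s) (Some bot) (Xcocone C A AM j (Some s) y) = x}"
      by (rule X_psi)
  qed
qed

end
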